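(* Let $\mathcal{N}$ denote the class of all networks $(X,A_X)$, where $X$ is a finite nonempty set and $A_X:X\times X\to\mathbb{R}$ satisfies $A_X(x,x')\ge 0$ for all $x,x'\in X$, with $A_X(x,x')=0$ if and only if $x=x'$ ($A_X$ need not be symmetric nor satisfy the triangle inequality). For a network $(X,A_X)$ define the unidirectional minimum chain cost $$\tilde u^{NR}_X(x,x')=\min_{C(x,x')}\ \max_{0\le i\le l-1}A_X(x_i,x_{i+1}),$$ where the minimum is over all chains $C(x,x')=[x=x_0,x_1,\dots,x_l=x']$ of nodes of $X$ from $x$ to $x'$, and set $$u^{NR}_X(x,x')=\max\big(\tilde u^{NR}_X(x,x'),\ \tilde u^{NR}_X(x',x)\big).$$ Let $\mathcal{H}^{NR}$ be the method assigning to each network $(X,A_X)$ the function $u^{NR}_X$. Then: (i) for every network $(X,A_X)\in\mathcal{N}$, $u^{NR}_X$ is an ultrametric on $X$; and (ii) $\mathcal{H}^{NR}$ satisfies the Axiom of Value (A1) and the Axiom of Transformation (A2).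
   Context: An ultrametric on a finite set $X$ is a function $u_X:X\times X\to\mathbb{R}$ that is nonnegative, symmetric ($u_X(x,x')=u_X(x',x)$), satisfies $u_X(x,x')=0$ iff $x=x'$, and satisfies the strong triangle inequality $u_X(x,x')\le\max\big(u_X(x,x''),u_X(x'',x')\big)$ for all $x,x',x''\in X$. A (hierarchical) clustering method $\mathcal{H}$ is a map assigning to every network $(X,A_X)$ an ultrametric $u_X$ on $X$ (equivalently a dendrogram on $X$). Axiom of Value (A1): for every two-node network $X=\{p,q\}$ with $A_X(p,q)=\alpha$, $A_X(q,p)=\beta$ (with $\alpha,\beta>0$), the output ultrametric satisfies $u_X(p,q)=\max(\alpha,\beta)$. Axiom of Transformation (A2): for any two networks $(X,A_X)$, $(Y,A_Y)$ and any map $\phi:X\to Y$ with $A_X(x,x')\ge A_Y(\phi(x),\phi(x'))$ for all $x,x'\in X$, the output ultrametrics $u_X=\mathcal{H}(X,A_X)$ and $u_Y=\mathcal{H}(Y,A_Y)$ satisfy $u_X(x,x')\ge u_Y(\phi(x),\phi(x'))$ for all $x,x'\in X$. *)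

theory Defs
  imports Main "HOL.Real"
begin

text \<open>A network: finite nonempty node set X with dissimilarity A, nonnegative,
  zero exactly on the diagonal (values of A outside X are irrelevant).\<close>
definition network :: "'a set \<Rightarrow> ('a \<Rightarrow> 'a \<Rightarrow> real) \<Rightarrow> bool" where
  "network X A \<longleftrightarrow> finite X \<and> X \<noteq> {} \<and>
     (\<forall>x\<in>X. \<forall>x'\<in>X. A x x' \<ge> 0 \<and> (A x x' = 0 \<longleftrightarrow> x = x'))"

definition is_chain :: "'a set \<Rightarrow> 'a \<Rightarrow> 'a \<Rightarrow> 'a list \<Rightarrow> bool" where
  "is_chain X x x' c \<longleftrightarrow> c \<noteq> [] \<and> hd c = x \<and> last c = x' \<and> set c \<subseteq> X"

text \<open>Cost of a chain: maximum link dissimilarity (0 for the trivial chain with l = 0).\<close>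
definition chain_cost :: "('a \<Rightarrow> 'a \<Rightarrow> real) \<Rightarrow> 'a list \<Rightarrow> real" where
  "chain_cost A c = Max (insert 0 {A (c ! i) (c ! Suc i) | i. Suc i < length c})"

text \<open>Unidirectional minimum chain cost (the minimum is attained; we write it as an infimum
  over the set of all chain costs).\<close>
definition u_tilde_NR :: "'a set \<Rightarrow> ('a \<Rightarrow> 'a \<Rightarrow> real) \<Rightarrow> 'a \<Rightarrow> 'a \<Rightarrow> real" where
  "u_tilde_NR X A x x' = Inf {chain_cost A c | c. is_chain X x x' c}"

definition u_NR :: "'a set \<Rightarrow> ('a \<Rightarrow> 'a \<Rightarrow> real) \<Rightarrow> 'a \<Rightarrow> 'a \<Rightarrow> real" where
  "u_NR X A x x' = max (u_tilde_NR X A x x') (u_tilde_NR X A x' x)"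

definition ultrametric :: "'a set \<Rightarrow> ('a \<Rightarrow> 'a \<Rightarrow> real) \<Rightarrow> bool" where
  "ultrametric X u \<longleftrightarrow>
     (\<forall>x\<in>X. \<forall>x'\<in>X. u x x' \<ge> 0 \<and> u x x' = u x' x \<and> (u x x' = 0 \<longleftrightarrow> x = x')) \<and>
     (\<forall>x\<in>X. \<forall>x'\<in>X. \<forall>x''\<in>X. u x x' \<le> max (u x x'') (u x'' x'))"

end

theory Submission
  imports Defs
begin

fun links :: "'a list \<Rightarrow> ('a \<times> 'a) list" where
  "links (a # b # r) = (a, b) # links (b # r)"
| "links _ = []"

lemma links_set: "set (links c) = {(c ! i, c ! Suc i) | i. Suc i < length c}"
proof (induction c rule: links.induct)
  case (1 a b r)
  show ?case
  proof
    show "set (links (a # b # r)) \<subseteq> {((a # b # r) ! i, (a # b # r) ! Suc i) |i. Suc i < length (a # b # r)}"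
    proof
      fix z assume "z \<in> set (links (a # b # r))"
      then have "z = (a, b) \<or> z \<in> set (links (b # r))" by simp
      then show "z \<in> {((a # b # r) ! i, (a # b # r) ! Suc i) |i. Suc i < length (a # b # r)}"
      proof
        assume "z = (a, b)"
        then show ?thesis by (intro CollectI exI[of _ 0]) simp
      next
        assume "z \<in> set (links (b # r))"
        then obtain i where "z = ((b # r) ! i, (b # r) ! Suc i)" "Suc i < length (b # r)"
          using 1 by blast
        then show ?thesis by (intro CollectI exI[of _ "Suc i"]) simp
      qed
    qed
    show "{((a # b # r) ! i, (a # b # r) ! Suc i) |i. Suc i < length (a # b # r)} \<subseteq> set (links (a # b # r))"
    proof clarify
      fix i assume "Suc i < length (a # b # r)"
      then show "((a # b # r) ! i, (a # b # r) ! Suc i) \<in> set (links (a # b # r))"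
        using 1 by (cases i) auto
    qed
  qed
qed auto

lemma cost_links: "chain_cost A c = Max (insert 0 ((\<lambda>(a,b). A a b) ` set (links c)))"
  unfolding chain_cost_def links_set by (rule arg_cong[where f=Max]) auto

lemma links_sub: "set (links c) \<subseteq> set c \<times> set c"
  by (induction c rule: links.induct) auto

lemma cost_ge0: "0 \<le> chain_cost A c"
  unfolding cost_links by (rule Max_ge) auto

lemma cost_ge_link: "(a,b) \<in> set (links c) \<Longrightarrow> A a b \<le> chain_cost A c"
  unfolding cost_links by (rule Max_ge) force+

lemma cost_le: "0 \<le> t \<Longrightarrow> (\<And>a b. (a,b) \<in> set (links c) \<Longrightarrow> A a b \<le> t) \<Longrightarrow> chain_cost A c \<le> t"
  unfolding cost_links by (subst Max_le_iff) auto

lemma links_append: "c1 \<noteq> [] \<Longrightarrow> c2 \<noteq> [] \<Longrightarrow> last c1 = hd c2 \<Longrightarrow>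
   set (links (c1 @ tl c2)) \<subseteq> set (links c1) \<union> set (links c2)"
proof (induction c1 rule: links.induct)
  case (1 a b r)
  then show ?case by auto
next
  case "2_1"
  then show ?case by (cases c2) auto
next
  case "2_2" then show ?case by simp
qed

lemma links_map: "links (map f c) = map (\<lambda>(a,b). (f a, f b)) (links c)"
  by (induction c rule: links.induct) auto

lemma links_cross: "c \<noteq> [] \<Longrightarrow> hd c \<in> P \<Longrightarrow> last c \<notin> P \<Longrightarrow> \<exists>(a,b)\<in>set (links c). a \<in> P \<and> b \<notin> P"
proof (induction c rule: links.induct)
  case (1 a b r)
  then show ?case by (cases "b \<in> P") auto
qed auto

lemma costs_finite:
  assumes "finite X"
  shows "finite {chain_cost A c | c. is_chain X x x' c}"
proof (rule finite_subset)
  show "{chain_cost A c | c. is_chain X x x' c} \<subseteq> insert 0 ((\<lambda>(a,b). A a b) ` (X \<times> X))"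
  proof (rule subsetI)
    fix y assume "y \<in> {chain_cost A c | c. is_chain X x x' c}"
    then obtain c where ch: "is_chain X x x' c" and y: "y = chain_cost A c" by blast
    have "chain_cost A c \<in> insert 0 ((\<lambda>(a,b). A a b) ` set (links c))"
      unfolding cost_links by (rule Max_in) auto
    moreover have "set (links c) \<subseteq> X \<times> X" using links_sub[of c] ch unfolding is_chain_def by blast
    ultimately show "y \<in> insert 0 ((\<lambda>(a,b). A a b) ` (X \<times> X))" using y by blast
  qed
  show "finite (insert 0 ((\<lambda>(a,b). A a b) ` (X \<times> X)))" using assms by simp
qed

lemma chain2: "x \<in> X \<Longrightarrow> x' \<in> X \<Longrightarrow> is_chain X x x' [x, x']"
  unfolding is_chain_def by auto

lemma ut_le: "finite X \<Longrightarrow> is_chain X x x' c \<Longrightarrow> u_tilde_NR X A x x' \<le> chain_cost A c"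
proof -
  assume a: "finite X" "is_chain X x x' c"
  have b: "bdd_below {chain_cost A c | c. is_chain X x x' c}"
    by (rule bdd_belowI[where m=0]) (auto simp: cost_ge0)
  show ?thesis unfolding u_tilde_NR_def
    by (rule cInf_lower[OF _ b]) (use a in blast)
qed

lemma ut_attained:
  assumes "finite X" "x \<in> X" "x' \<in> X"
  shows "\<exists>c. is_chain X x x' c \<and> u_tilde_NR X A x x' = chain_cost A c"
proof -
  let ?S = "{chain_cost A c | c. is_chain X x x' c}"
  have ne: "?S \<noteq> {}" using chain2[OF assms(2,3)] by blast
  have "Inf ?S = Min ?S" by (rule cInf_eq_Min[OF costs_finite[OF assms(1)] ne])
  also have "\<dots> \<in> ?S" by (rule Min_in[OF costs_finite[OF assms(1)] ne])
  finally show ?thesis unfolding u_tilde_NR_def by auto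
qed

lemma ut_ge0: "finite X \<Longrightarrow> x \<in> X \<Longrightarrow> x' \<in> X \<Longrightarrow> 0 \<le> u_tilde_NR X A x x'"
proof -
  assume a: "finite X" "x \<in> X" "x' \<in> X"
  obtain c where "u_tilde_NR X A x x' = chain_cost A c" using ut_attained[OF a, of A] by blast
  then show ?thesis using cost_ge0[of A c] by simp
qed

lemma ut_refl: "finite X \<Longrightarrow> x \<in> X \<Longrightarrow> u_tilde_NR X A x x = 0"
proof -
  assume a: "finite X" "x \<in> X"
  have "is_chain X x x [x]" using a unfolding is_chain_def by auto
  then have "u_tilde_NR X A x x \<le> chain_cost A [x]" by (rule ut_le[OF a(1)])
  also have "chain_cost A [x] = 0" unfolding cost_links by simp
  finally show ?thesis using ut_ge0[OF a a(2), of A] by simp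
qed

lemma ut_pos:
  assumes "network X A" "x \<in> X" "x' \<in> X" "x \<noteq> x'"
  shows "0 < u_tilde_NR X A x x'"
proof -
  have f: "finite X" using assms(1) unfolding network_def by simp
  obtain c where c: "is_chain X x x' c" "u_tilde_NR X A x x' = chain_cost A c"
    using ut_attained[OF f assms(2,3)] by blast
  then obtain a b where ab: "(a,b) \<in> set (links c)" "a \<in> {x}" "b \<notin> {x}"
    using links_cross[of c "{x}"] assms(4) unfolding is_chain_def by auto
  have "b \<in> X" using ab(1) links_sub[of c] c(1) unfolding is_chain_def by auto
  moreover have "a = x" "b \<noteq> x" using ab(2,3) by auto
  ultimately have "0 \<le> A a b" "A a b \<noteq> 0" using assms(1,2) unfolding network_def by auto
  then have "0 < A a b" by simp
  also have "\<dots> \<le> chain_cost A c" by (rule cost_ge_link[OF ab(1)])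
  finally show ?thesis using c by simp
qed

lemma ut_tri:
  assumes "finite X" "x \<in> X" "y \<in> X" "z \<in> X"
  shows "u_tilde_NR X A x z \<le> max (u_tilde_NR X A x y) (u_tilde_NR X A y z)"
proof -
  obtain c1 where c1: "is_chain X x y c1" "u_tilde_NR X A x y = chain_cost A c1"
    using ut_attained[OF assms(1,2,3)] by blast
  obtain c2 where c2: "is_chain X y z c2" "u_tilde_NR X A y z = chain_cost A c2"
    using ut_attained[OF assms(1,3,4)] by blast
  have ch: "is_chain X x z (c1 @ tl c2)"
    using c1(1) c2(1) unfolding is_chain_def
    by (cases c2) (auto simp: last_append)
  have "chain_cost A (c1 @ tl c2) \<le> max (chain_cost A c1) (chain_cost A c2)"
  proof (rule cost_le)
    show "0 \<le> max (chain_cost A c1) (chain_cost A c2)" using cost_ge0[of A c1] by (simp add: le_max_iff_disj)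
    fix a b assume "(a,b) \<in> set (links (c1 @ tl c2))"
    then have "(a,b) \<in> set (links c1) \<or> (a,b) \<in> set (links c2)"
      using links_append[of c1 c2] c1(1) c2(1) unfolding is_chain_def by auto
    then show "A a b \<le> max (chain_cost A c1) (chain_cost A c2)"
      using cost_ge_link[of a b c1 A] cost_ge_link[of a b c2 A] by (auto simp: le_max_iff_disj)
  qed
  then show ?thesis using ut_le[OF assms(1) ch, of A] c1 c2 by simp
qed

lemma ut_map:
  assumes "network X AX" "network Y AY" "\<phi> ` X \<subseteq> Y"
    "\<forall>x\<in>X. \<forall>x'\<in>X. AX x x' \<ge> AY (\<phi> x) (\<phi> x')" "x \<in> X" "x' \<in> X"
  shows "u_tilde_NR Y AY (\<phi> x) (\<phi> x') \<le> u_tilde_NR X AX x x'"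
proof -
  have fX: "finite X" and fY: "finite Y" using assms unfolding network_def by auto
  obtain c where c: "is_chain X x x' c" "u_tilde_NR X AX x x' = chain_cost AX c"
    using ut_attained[OF fX assms(5,6)] by blast
  have ch: "is_chain Y (\<phi> x) (\<phi> x') (map \<phi> c)"
    using c(1) assms(3) unfolding is_chain_def by (auto simp: hd_map last_map)
  have "chain_cost AY (map \<phi> c) \<le> chain_cost AX c"
  proof (rule cost_le[OF cost_ge0])
    fix a b assume "(a,b) \<in> set (links (map \<phi> c))"
    then obtain a0 b0 where ab: "(a0,b0) \<in> set (links c)" "a = \<phi> a0" "b = \<phi> b0"
      unfolding links_map by auto
    have "a0 \<in> X" "b0 \<in> X" using ab(1) links_sub[of c] c(1) unfolding is_chain_def by auto
    then have "AY a b \<le> AX a0 b0" using assms(4) ab by auto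
    also have "\<dots> \<le> chain_cost AX c" by (rule cost_ge_link[OF ab(1)])
    finally show "AY a b \<le> chain_cost AX c" .
  qed
  then show ?thesis using ut_le[OF fY ch, of AY] c by simp
qed

lemma ut_value:
  assumes "p \<noteq> q" "network {p, q} A"
  shows "u_tilde_NR {p, q} A p q = A p q"
proof -
  have f: "finite {p,q}" by simp
  obtain c where c: "is_chain {p,q} p q c" "u_tilde_NR {p,q} A p q = chain_cost A c"
    using ut_attained[OF f, of p q A] by blast
  then obtain a b where ab: "(a,b) \<in> set (links c)" "a \<in> {p}" "b \<notin> {p}"
    using links_cross[of c "{p}"] assms(1) unfolding is_chain_def by auto
  have "b \<in> {p,q}" using ab(1) links_sub[of c] c(1) unfolding is_chain_def by auto
  then have "a = p" "b = q" using ab by auto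
  then have "A p q \<le> u_tilde_NR {p,q} A p q" using cost_ge_link[OF ab(1)] c by simp
  moreover have "u_tilde_NR {p,q} A p q \<le> chain_cost A [p,q]"
    by (rule ut_le[OF f chain2]) auto
  moreover have "chain_cost A [p,q] \<le> A p q"
  proof (rule cost_le)
    show "0 \<le> A p q" using assms(2) unfolding network_def by blast
    fix a b assume "(a, b) \<in> set (links [p, q])"
    then show "A a b \<le> A p q" by simp
  qed
  ultimately show ?thesis by simp
qed

lemma max6: "(a::real) \<le> max c e \<Longrightarrow> b \<le> max f d \<Longrightarrow> max a b \<le> max (max c d) (max e f)"
  by (auto simp: max_def split: if_splits)

theorem proposition2:
  shows "(\<forall>(X :: 'a set) A. network X A \<longrightarrow> ultrametric X (u_NR X A))
    \<and> (\<forall>(p :: 'a) q A \<alpha> \<beta>. p \<noteq> q \<longrightarrow> network {p, q} A \<longrightarrow>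
          A p q = \<alpha> \<longrightarrow> A q p = \<beta> \<longrightarrow> \<alpha> > 0 \<longrightarrow> \<beta> > 0 \<longrightarrow>
          u_NR {p, q} A p q = max \<alpha> \<beta>)
    \<and> (\<forall>(X :: 'a set) AX (Y :: 'b set) AY (\<phi> :: 'a \<Rightarrow> 'b).
          network X AX \<longrightarrow> network Y AY \<longrightarrow> \<phi> ` X \<subseteq> Y \<longrightarrow>
          (\<forall>x\<in>X. \<forall>x'\<in>X. AX x x' \<ge> AY (\<phi> x) (\<phi> x')) \<longrightarrow>
          (\<forall>x\<in>X. \<forall>x'\<in>X. u_NR X AX x x' \<ge> u_NR Y AY (\<phi> x) (\<phi> x')))"
proof (intro conjI allI impI ballI)
  fix X :: "'a set" and A assume n: "network X A"
  then have f: "finite X" unfolding network_def by simp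
  show "ultrametric X (u_NR X A)"
    unfolding ultrametric_def u_NR_def
  proof (intro conjI ballI)
    fix x x' assume x: "x \<in> X" "x' \<in> X"
    show "0 \<le> max (u_tilde_NR X A x x') (u_tilde_NR X A x' x)"
      using ut_ge0[OF f x] by (simp add: le_max_iff_disj)
    show "max (u_tilde_NR X A x x') (u_tilde_NR X A x' x) = max (u_tilde_NR X A x' x) (u_tilde_NR X A x x')"
      by (simp add: max.commute)
    show "(max (u_tilde_NR X A x x') (u_tilde_NR X A x' x) = 0) = (x = x')"
    proof (cases "x = x'")
      case True
      then show ?thesis using ut_refl[OF f x(1)] by simp
    next
      case False
      have "0 < u_tilde_NR X A x x'" using ut_pos[OF n x False] .
      then have "0 < max (u_tilde_NR X A x x') (u_tilde_NR X A x' x)" by (simp add: less_max_iff_disj)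
      then show ?thesis using False by simp
    qed
  next
    fix x x' x'' assume x: "x \<in> X" "x' \<in> X" "x'' \<in> X"
    show "max (u_tilde_NR X A x x') (u_tilde_NR X A x' x) \<le>
       max (max (u_tilde_NR X A x x'') (u_tilde_NR X A x'' x)) (max (u_tilde_NR X A x'' x') (u_tilde_NR X A x' x''))"
      by (rule max6[OF ut_tri[OF f x(1) x(3) x(2)] ut_tri[OF f x(2) x(3) x(1)]])
  qed
next
  fix p q :: 'a and A and \<alpha> \<beta> :: real
  assume a: "p \<noteq> q" "network {p, q} A" "A p q = \<alpha>" "A q p = \<beta>"
  have e: "{q, p} = {p, q}" by blast
  have "network {q, p} A" using a(2) e by simp
  then have "u_tilde_NR {q, p} A q p = A q p" using ut_value[of q p A] a(1) by blast
  then have "u_tilde_NR {p, q} A q p = \<beta>" using e a(4) by simp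
  moreover have "u_tilde_NR {p, q} A p q = \<alpha>" using ut_value[OF a(1,2)] a(3) by simp
  ultimately show "u_NR {p, q} A p q = max \<alpha> \<beta>"
    unfolding u_NR_def by simp
next
  fix X :: "'a set" and AX and Y :: "'b set" and AY and \<phi> :: "'a \<Rightarrow> 'b" and x x'
  assume a: "network X AX" "network Y AY" "\<phi> ` X \<subseteq> Y"
    "\<forall>x\<in>X. \<forall>x'\<in>X. AY (\<phi> x) (\<phi> x') \<le> AX x x'" "x \<in> X" "x' \<in> X"
  show "u_NR Y AY (\<phi> x) (\<phi> x') \<le> u_NR X AX x x'"
    unfolding u_NR_def by (rule max.mono[OF ut_map[OF a(1-4) a(5,6)] ut_map[OF a(1-4) a(6,5)]])
qed

end
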